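(* Let $G$ be a graph of girth at least $4$. Then $G$ is fragile if and only if every subgraph $H$ of $G$ either has at most $2$ vertices or admits an independent cutset of size at most $2$.
   Context: All graphs are finite and simple. A graph is $k$-connected if it has at least $k+1$ vertices and no vertex cutset with at most $k-1$ vertices. A graph is fragile if it has no $3$-connected subgraph. A cutset of a graph $H$ is a set $S\subseteq V(H)$ (possibly empty) such that $H\setminus S$ is disconnected; it is independent if no two vertices of $S$ are adjacent. The girth of a graph is the length of its shortest cycle (infinite if acyclic). *)

theory Defs
  imports Main
begin

definition graph :: "'a set \<Rightarrow> 'a set set \<Rightarrow> bool" where
  "graph V E \<longleftrightarrow> finite V \<and> (\<forall>e\<in>E. e \<subseteq> V \<and> card e = 2)"

definition adj :: "'a set set \<Rightarrow> 'a \<Rightarrow> 'a \<Rightarrow> bool" where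
  "adj E u v \<longleftrightarrow> {u, v} \<in> E"

definition reachable :: "'a set \<Rightarrow> 'a set set \<Rightarrow> 'a \<Rightarrow> 'a \<Rightarrow> bool" where
  "reachable V E u v \<longleftrightarrow> (\<lambda>x y. x \<in> V \<and> y \<in> V \<and> adj E x y)\<^sup>*\<^sup>* u v"

definition disconnected :: "'a set \<Rightarrow> 'a set set \<Rightarrow> bool" where
  "disconnected V E \<longleftrightarrow> (\<exists>u\<in>V. \<exists>v\<in>V. \<not> reachable V E u v)"

definition subgraph :: "'a set \<Rightarrow> 'a set set \<Rightarrow> 'a set \<Rightarrow> 'a set set \<Rightarrow> bool" where
  "subgraph V' E' V E \<longleftrightarrow> V' \<subseteq> V \<and> E' \<subseteq> E \<and> graph V' E'"

definition cutset :: "'a set \<Rightarrow> 'a set set \<Rightarrow> 'a set \<Rightarrow> bool" where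
  "cutset V E S \<longleftrightarrow> S \<subseteq> V \<and> disconnected (V - S) {e\<in>E. e \<inter> S = {}}"

definition independent :: "'a set set \<Rightarrow> 'a set \<Rightarrow> bool" where
  "independent E S \<longleftrightarrow> (\<forall>u\<in>S. \<forall>v\<in>S. \<not> adj E u v)"

definition k_connected :: "nat \<Rightarrow> 'a set \<Rightarrow> 'a set set \<Rightarrow> bool" where
  "k_connected k V E \<longleftrightarrow> card V \<ge> k + 1 \<and>
     \<not> (\<exists>S. cutset V E S \<and> card S \<le> k - 1)"

definition fragile :: "'a set \<Rightarrow> 'a set set \<Rightarrow> bool" where
  "fragile V E \<longleftrightarrow> \<not> (\<exists>V' E'. subgraph V' E' V E \<and> k_connected 3 V' E')"

text \<open>Girth at least 4 for a simple graph: no cycle of length 3 (simple graphs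
  have no cycles of length 1 or 2), i.e. no triangle.\<close>
definition girth_ge_4 :: "'a set \<Rightarrow> 'a set set \<Rightarrow> bool" where
  "girth_ge_4 V E \<longleftrightarrow> \<not> (\<exists>a\<in>V. \<exists>b\<in>V. \<exists>c\<in>V. adj E a b \<and> adj E b c \<and> adj E a c)"

end

theory Submission
  imports Defs
begin

lemma adj_sym: "adj E u v = adj E v u"
  unfolding adj_def by (simp add: insert_commute)

lemma adj_irrefl: "graph V E \<Longrightarrow> \<not> adj E u u"
  unfolding adj_def graph_def by force

lemma adj_in: "graph V E \<Longrightarrow> adj E u v \<Longrightarrow> u \<in> V \<and> v \<in> V"
  unfolding adj_def graph_def by blast

definition sep :: "'a set \<Rightarrow> 'a set set \<Rightarrow> 'a set \<Rightarrow> 'a set \<Rightarrow> bool" where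
  "sep V E T X \<longleftrightarrow> T \<subseteq> V \<and> X \<noteq> {} \<and> X \<subseteq> V - T \<and> V - T - X \<noteq> {} \<and>
     (\<forall>x\<in>X. \<forall>y\<in>V - T. adj E x y \<longrightarrow> y \<in> X)"

lemma closed_rtranclp:
  assumes "r\<^sup>*\<^sup>* a b" "a \<in> A" "\<And>x y. x \<in> A \<Longrightarrow> r x y \<Longrightarrow> y \<in> A"
  shows "b \<in> A"
  using assms by (induction rule: rtranclp_induct) auto

lemma cutset_of_sep:
  assumes "sep V E T X" shows "cutset V E T"
proof -
  from assms obtain a b where a: "a \<in> X" and b: "b \<in> V - T - X" unfolding sep_def by blast
  have "\<not> reachable (V - T) {e\<in>E. e \<inter> T = {}} a b"
  proof
    assume "reachable (V - T) {e\<in>E. e \<inter> T = {}} a b"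
    hence "b \<in> X" unfolding reachable_def
      apply (rule closed_rtranclp)
      using a assms unfolding sep_def adj_def by auto
    with b show False by blast
  qed
  moreover have "a \<in> V - T" using a assms unfolding sep_def by blast
  ultimately show ?thesis using assms b unfolding cutset_def disconnected_def sep_def by blast
qed

lemma sep_of_cutset:
  assumes "cutset V E T" shows "\<exists>X. sep V E T X"
proof -
  let ?E = "{e\<in>E. e \<inter> T = {}}"
  from assms obtain a b where ab: "a \<in> V - T" "b \<in> V - T" "\<not> reachable (V - T) ?E a b"
    and TV: "T \<subseteq> V"
    unfolding cutset_def disconnected_def by blast
  define X where "X = {y. reachable (V - T) ?E a y}"
  have Xs: "X \<subseteq> V - T"
  proof
    fix y assume "y \<in> X"
    hence "(\<lambda>x y. x \<in> V - T \<and> y \<in> V - T \<and> adj ?E x y)\<^sup>*\<^sup>* a y" unfolding X_def reachable_def by simp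
    thus "y \<in> V - T" using ab(1) by (rule closed_rtranclp) auto
  qed
  have aX: "a \<in> X" unfolding X_def reachable_def by simp
  have bX: "b \<notin> X" using ab unfolding X_def by simp
  have cl: "\<forall>x\<in>X. \<forall>y\<in>V - T. adj E x y \<longrightarrow> y \<in> X"
  proof (intro ballI impI)
    fix x y assume xX: "x \<in> X" and y: "y \<in> V - T" and xy: "adj E x y"
    have "x \<in> V - T" using xX Xs by blast
    hence "adj ?E x y" using y xy unfolding adj_def by auto
    thus "y \<in> X" using xX y \<open>x \<in> V - T\<close> unfolding X_def reachable_def
      by (auto intro: rtranclp.rtrancl_into_rtrancl)
  qed
  have "sep V E T X" unfolding sep_def using TV Xs aX bX ab(2) cl by blast
  thus ?thesis by blast
qed

lemma sep_compl: "sep V E T X \<Longrightarrow> sep V E T (V - T - X)"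
  unfolding sep_def by (auto simp: adj_sym)

lemma sep3:
  assumes "graph V' E'" "V' = {a,b,c}" "a \<noteq> b" "b \<noteq> c" "a \<noteq> c" "\<not> adj E' a b"
  shows "sep V' E' {c} {a}"
  using assms adj_irrefl[OF assms(1), of a] unfolding sep_def by auto

lemma main_dir:
  assumes G: "graph V E" and gi: "girth_ge_4 V E" and fr: "fragile V E"
    and H: "subgraph V' E' V E" and c3: "card V' \<ge> 3"
  shows "\<exists>S. cutset V' E' S \<and> independent E' S \<and> card S \<le> 2"
proof (rule ccontr)
  assume no: "\<not> ?thesis"
  have HG: "graph V' E'" and VV: "V' \<subseteq> V" and EE: "E' \<subseteq> E" using H unfolding subgraph_def by auto
  have finV': "finite V'" using HG unfolding graph_def by simp
  have edge: "\<exists>u v. T = {u,v} \<and> u \<noteq> v \<and> adj E' u v" if "sep V' E' T X" "card T \<le> 2" for T X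
  proof -
    have "cutset V' E' T" using that(1) by (rule cutset_of_sep)
    hence "\<not> independent E' T" using no that(2) by blast
    then obtain u v where uv: "u \<in> T" "v \<in> T" "adj E' u v" unfolding independent_def by blast
    have "u \<noteq> v" using uv(3) adj_irrefl[OF HG] by blast
    have fT: "finite T" using that(1) finV' unfolding sep_def by (meson finite_subset)
    have "T = {u,v}"
    proof (rule ccontr)
      assume "T \<noteq> {u,v}"
      then obtain w where w: "w \<in> T" "w \<notin> {u,v}" using uv by blast
      hence "{u,v,w} \<subseteq> T" using uv by blast
      hence "card {u,v,w} \<le> card T" using fT by (simp add: card_mono)
      moreover have "card {u,v,w} = 3" using w \<open>u \<noteq> v\<close> by (auto simp: card_insert_if)
      ultimately show False using that(2) by simp
    qed
    thus ?thesis using uv \<open>u \<noteq> v\<close> by blast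
  qed
  have start: "\<exists>T X. sep V' E' T X \<and> card T \<le> 2"
  proof (cases "card V' \<ge> 4")
    case True
    have "\<not> k_connected 3 V' E'" using fr H unfolding fragile_def by blast
    then obtain S where "cutset V' E' S" "card S \<le> 2" using True unfolding k_connected_def by auto
    thus ?thesis using sep_of_cutset by blast
  next
    case False
    hence "card V' = 3" using c3 by simp
    then obtain x y z where V3: "V' = {x,y,z}" "x\<noteq>y" "y\<noteq>z" "x\<noteq>z" by (auto simp: card_3_iff)
    have "\<not> (adj E' x y \<and> adj E' y z \<and> adj E' x z)"
      using gi VV V3 EE unfolding girth_ge_4_def adj_def by blast
    moreover have "sep V' E' {z} {x}" if "\<not> adj E' x y"
      using sep3[OF HG V3 that] .
    moreover have "sep V' E' {x} {y}" if "\<not> adj E' y z"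
      using sep3[OF HG _ _ _ _ that, of x] V3 by (simp add: insert_commute)
    moreover have "sep V' E' {y} {x}" if "\<not> adj E' x z"
      using sep3[OF HG _ _ _ _ that, of y] V3 by (simp add: insert_commute)
    ultimately show ?thesis by force
  qed
  define P where "P n \<longleftrightarrow> (\<exists>T X. sep V' E' T X \<and> card T \<le> 2 \<and> card X = n)" for n
  have "\<exists>n. P n" using start unfolding P_def by blast
  then obtain n where Pn: "P n" and minn: "\<And>m. m < n \<Longrightarrow> \<not> P m" using exists_least_iff[of P] by blast
  then obtain T X where TX: "sep V' E' T X" "card T \<le> 2" "card X = n" unfolding P_def by blast
  have mini: "card X \<le> card X'" if "sep V' E' T' X'" "card T' \<le> 2" for T' X'
    using minn[of "card X'"] that TX(3) unfolding P_def by force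
  obtain u v where T: "T = {u,v}" "u \<noteq> v" "adj E' u v" using edge[OF TX(1,2)] by blast
  have Xsub: "X \<subseteq> V' - T" and Xne: "X \<noteq> {}" and Xcl: "\<forall>x\<in>X. \<forall>y\<in>V' - T. adj E' x y \<longrightarrow> y \<in> X"
    and rest: "V' - T - X \<noteq> {}" and TV: "T \<subseteq> V'" using TX(1) unfolding sep_def by auto
  have finX: "finite X" using Xsub finV' by (meson finite_subset Diff_subset subset_trans)
  have nb: "y \<in> X \<union> T" if "x \<in> X" "adj E' x y" for x y
    using adj_in[OF HG that(2)] Xcl that by blast
  show False
  proof (cases "card X \<ge> 2")
    case False
    have "card X \<noteq> 0" using finX Xne by simp
    hence "card X = 1" using False by simp
    then obtain w where Xw: "X = {w}" by (rule card_1_singletonE)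
    have wadj: "adj E' w p" if "p \<in> {u,v}" for p
    proof (rule ccontr)
      assume na: "\<not> adj E' w p"
      have "\<exists>q. T = {p,q} \<and> q \<noteq> p" using that T(1,2) by (cases "p = u") (auto simp: insert_commute)
      then obtain q where pq: "T = {p,q}" "q \<noteq> p" by blast
      have "sep V' E' {q} {w}" unfolding sep_def
      proof (intro conjI)
        show "{q} \<subseteq> V'" using TV pq by auto
        show "{w} \<subseteq> V' - {q}" using Xsub Xw pq by auto
        have "p \<in> V' - {q} - {w}" using TV pq Xsub Xw by auto
        thus "V' - {q} - {w} \<noteq> {}" by blast
        show "\<forall>x\<in>{w}. \<forall>y\<in>V' - {q}. adj E' x y \<longrightarrow> y \<in> {w}"
          using nb Xw pq na by auto
      qed simp
      from edge[OF this] show False by auto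
    qed
    have "adj E u v" "adj E v w" "adj E u w"
      using T(3) wadj[of u] wadj[of v] EE unfolding adj_def by (auto simp: insert_commute)
    moreover have "u \<in> V" "v \<in> V" "w \<in> V" using TV T Xsub Xw VV by auto
    ultimately show False using gi unfolding girth_ge_4_def by blast
  next
    case True
    define KV where "KV = X \<union> {u,v}"
    define KE where "KE = {e\<in>E'. e \<subseteq> KV}"
    have KVsub: "KV \<subseteq> V'" using Xsub TV T unfolding KV_def by auto
    have Kg: "graph KV KE" using HG KVsub finV' finite_subset unfolding graph_def KE_def by blast
    have Ksub: "subgraph KV KE V E" using Kg KVsub VV EE unfolding subgraph_def KE_def by auto
    have disj: "X \<inter> {u,v} = {}" using Xsub T by auto
    have "card KV = card X + 2" unfolding KV_def using card_Un_disjoint[OF finX _ disj] T(2) by simp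
    hence "card KV \<ge> 4" using True by simp
    have "\<not> k_connected 3 KV KE" using fr Ksub unfolding fragile_def by blast
    then obtain S where S: "cutset KV KE S" "card S \<le> 2" using \<open>card KV \<ge> 4\<close>
      unfolding k_connected_def by auto
    obtain Y0 where Y0: "sep KV KE S Y0" using sep_of_cutset[OF S(1)] by blast
    have uvK: "adj KE u v" "adj KE v u" using T unfolding adj_def KE_def KV_def
      by (auto simp: insert_commute)
    have Y0cl: "\<forall>x\<in>Y0. \<forall>y\<in>KV - S. adj KE x y \<longrightarrow> y \<in> Y0" using Y0 unfolding sep_def by blast
    have Y0s: "Y0 \<subseteq> KV - S" using Y0 unfolding sep_def by blast
    obtain Y where Y: "sep KV KE S Y" "Y \<inter> {u,v} = {}"
    proof (cases "Y0 \<inter> {u,v} = {}")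
      case True thus ?thesis using Y0 that by blast
    next
      case False
      have uvKV: "u \<in> KV" "v \<in> KV" unfolding KV_def by auto
      have "(KV - S - Y0) \<inter> {u,v} = {}"
        using False Y0cl uvK uvKV by blast
      thus ?thesis using sep_compl[OF Y0] that by blast
    qed
    have Ycl: "\<forall>x\<in>Y. \<forall>y\<in>KV - S. adj KE x y \<longrightarrow> y \<in> Y" and Ys: "Y \<subseteq> KV - S"
      and Yne: "Y \<noteq> {}" and Yrest: "KV - S - Y \<noteq> {}" and SK: "S \<subseteq> KV"
      using Y(1) unfolding sep_def by auto
    have YX: "Y \<subseteq> X" using Ys Y(2) unfolding KV_def by auto
    have sepH: "sep V' E' S Y" unfolding sep_def
    proof (intro conjI)
      show "S \<subseteq> V'" using SK KVsub by blast
      show "Y \<noteq> {}" by fact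
      show "Y \<subseteq> V' - S" using Ys KVsub by blast
      show "V' - S - Y \<noteq> {}" using Yrest KVsub by blast
      show "\<forall>x\<in>Y. \<forall>y\<in>V' - S. adj E' x y \<longrightarrow> y \<in> Y"
      proof (intro ballI impI)
        fix x y assume xY: "x \<in> Y" and y: "y \<in> V' - S" and xy: "adj E' x y"
        have "x \<in> X" using xY YX by blast
        hence "y \<in> KV" using nb xy T unfolding KV_def by blast
        moreover have "x \<in> KV" using \<open>x \<in> X\<close> unfolding KV_def by blast
        ultimately have "adj KE x y" using xy unfolding adj_def KE_def by auto
        thus "y \<in> Y" using Ycl xY y \<open>y \<in> KV\<close> by blast
      qed
    qed
    obtain p q where pq: "S = {p,q}" "p \<noteq> q" using edge[OF sepH S(2)] by blast
    have cXY: "card X \<le> card Y" using mini[OF sepH S(2)] .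
    have YXS: "Y \<subseteq> X - S" using YX Ys by blast
    have SX: "S \<inter> X = {}"
    proof (rule ccontr)
      assume "S \<inter> X \<noteq> {}"
      hence "X - S \<subset> X" by blast
      hence "card (X - S) < card X" using finX by (rule psubset_card_mono[rotated])
      moreover have "card Y \<le> card (X - S)" using YXS finX by (simp add: card_mono)
      ultimately show False using cXY by simp
    qed
    hence "S \<subseteq> {u,v}" using SK unfolding KV_def by blast
    moreover have "card S = 2" using pq by simp
    ultimately have "S = {u,v}" using T(2) by (simp add: card_subset_eq)
    hence "KV - S = X" using disj unfolding KV_def by blast
    moreover have "Y = X" using cXY YX finX by (meson card_seteq)
    ultimately show False using Yrest by blast
  qed
qed

theorem mainTheorem9:
  fixes V :: "'a set" and E :: "'a set set"
  assumes "graph V E" and "girth_ge_4 V E"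
  shows "fragile V E \<longleftrightarrow>
    (\<forall>V' E'. subgraph V' E' V E \<longrightarrow>
       card V' \<le> 2 \<or> (\<exists>S. cutset V' E' S \<and> independent E' S \<and> card S \<le> 2))"
proof
  assume "fragile V E"
  thus "\<forall>V' E'. subgraph V' E' V E \<longrightarrow>
       card V' \<le> 2 \<or> (\<exists>S. cutset V' E' S \<and> independent E' S \<and> card S \<le> 2)"
  proof (intro allI impI)
    fix V' E' assume "subgraph V' E' V E"
    thus "card V' \<le> 2 \<or> (\<exists>S. cutset V' E' S \<and> independent E' S \<and> card S \<le> 2)"
      using main_dir[OF assms \<open>fragile V E\<close>, of V' E'] by (cases "card V' \<le> 2") auto
  qed
next
  assume R: "\<forall>V' E'. subgraph V' E' V E \<longrightarrow>
       card V' \<le> 2 \<or> (\<exists>S. cutset V' E' S \<and> independent E' S \<and> card S \<le> 2)"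
  show "fragile V E" unfolding fragile_def k_connected_def
  proof
    assume "\<exists>V' E'. subgraph V' E' V E \<and> 3 + 1 \<le> card V' \<and> \<not> (\<exists>S. cutset V' E' S \<and> card S \<le> 3 - 1)"
    then obtain V' E' where "subgraph V' E' V E" "4 \<le> card V'" "\<not> (\<exists>S. cutset V' E' S \<and> card S \<le> 2)"
      by auto
    thus False using R by force
  qed
qed

end
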